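(* Let $T_l$ be a $2m$ deck-shuffler IET. Then there is a $(2m-1)$-flower $F_l$ for $E_2$ such that $H_l([0,1))\subset F_l$.
   Context: $\mathbb{T}=\mathbb{R}/\mathbb{Z}\cong[0,1)$, $E_2(x)=2x\bmod1$. A $2m$ deck-shuffler IET $T_l$ is the map $[0,1)\to[0,1)$ determined by a length vector $l$ giving a partition of $[0,1)$ into consecutive left-closed right-open intervals $A_1<\dots<A_m<B_1<\dots<B_m$ of positive lengths, with $T_l(x)=x+|B_1|+\dots+|B_i|$ for $x\in A_i$ and $T_l(x)=x-|A_i|-\dots-|A_m|$ for $x\in B_i$. $B=B_1\cup\dots\cup B_m$ and $H_l(x)=\sum_{n=0}^\infty \chi_B(T_l^n x)/2^{n+1}$. A preimage selector for $E_2$ is a map $\eta:\mathbb{T}\to\mathbb{T}$ with $E_2(\eta(x))=x$ for all $x$, having finitely many discontinuities, each a jump discontinuity (both one-sided limits exist, differ, and one equals the value). A $p$-flower is $\overline{\eta(\mathbb{T})}$ for a preimage selector with exactly $p$ discontinuities. *)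

theory Defs
  imports "HOL-Analysis.Analysis"
begin

text \<open>The circle T = R/Z is represented by [0,1) (reals taken mod 1);
  its topology is obtained through the embedding circ t = cis (2 pi t).\<close>

definition circ :: "real \<Rightarrow> complex" where
  "circ t = cis (2 * pi * t)"

definition Aint :: "(nat \<Rightarrow> real) \<Rightarrow> nat \<Rightarrow> real set" where
  "Aint a i = {(\<Sum>j=1..<i. a j) ..< (\<Sum>j=1..i. a j)}"

definition Bint :: "nat \<Rightarrow> (nat \<Rightarrow> real) \<Rightarrow> (nat \<Rightarrow> real) \<Rightarrow> nat \<Rightarrow> real set" where
  "Bint m a b i = {(\<Sum>j=1..m. a j) + (\<Sum>j=1..<i. b j) ..< (\<Sum>j=1..m. a j) + (\<Sum>j=1..i. b j)}"

definition Bset :: "nat \<Rightarrow> (nat \<Rightarrow> real) \<Rightarrow> (nat \<Rightarrow> real) \<Rightarrow> real set" where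
  "Bset m a b = (\<Union>i\<in>{1..m}. Bint m a b i)"

definition deck_shuffler :: "nat \<Rightarrow> (nat \<Rightarrow> real) \<Rightarrow> (nat \<Rightarrow> real) \<Rightarrow> real \<Rightarrow> real" where
  "deck_shuffler m a b x =
     x + (\<Sum>i=1..m. (if x \<in> Aint a i then (\<Sum>j=1..i. b j) else 0)
                    - (if x \<in> Bint m a b i then (\<Sum>j=i..m. a j) else 0))"

definition H_map :: "nat \<Rightarrow> (nat \<Rightarrow> real) \<Rightarrow> (nat \<Rightarrow> real) \<Rightarrow> real \<Rightarrow> real" where
  "H_map m a b x = (\<Sum>n. indicator (Bset m a b) ((deck_shuffler m a b ^^ n) x) / 2 ^ (Suc n))"

text \<open>A map eta : T \<rightarrow> T given by a real function on [0,1), values read mod 1;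
  its lift to the circle is t \<mapsto> circ (eta (frac t)).\<close>

definition circle_lift :: "(real \<Rightarrow> real) \<Rightarrow> real \<Rightarrow> complex" where
  "circle_lift \<eta> t = circ (\<eta> (frac t))"

definition discont_set :: "(real \<Rightarrow> real) \<Rightarrow> real set" where
  "discont_set \<eta> = {x \<in> {0..<1}. \<not> isCont (circle_lift \<eta>) x}"

definition jump_discont :: "(real \<Rightarrow> real) \<Rightarrow> real \<Rightarrow> bool" where
  "jump_discont \<eta> x \<longleftrightarrow> (\<exists>L R. (circle_lift \<eta> \<longlongrightarrow> L) (at_left x) \<and>
      (circle_lift \<eta> \<longlongrightarrow> R) (at_right x) \<and> L \<noteq> R \<and>
      (L = circle_lift \<eta> x \<or> R = circle_lift \<eta> x))"

definition preimage_selector :: "(real \<Rightarrow> real) \<Rightarrow> bool" where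
  "preimage_selector \<eta> \<longleftrightarrow> (\<forall>x\<in>{0..<1}. frac (2 * \<eta> x) = x) \<and>
      finite (discont_set \<eta>) \<and> (\<forall>x\<in>discont_set \<eta>. jump_discont \<eta> x)"

definition flower_of :: "(real \<Rightarrow> real) \<Rightarrow> real set" where
  "flower_of \<eta> = {y \<in> {0..<1}. circ y \<in> closure (circ ` \<eta> ` {0..<1})}"

definition is_flower :: "nat \<Rightarrow> real set \<Rightarrow> bool" where
  "is_flower p F \<longleftrightarrow> (\<exists>\<eta>. preimage_selector \<eta> \<and> card (discont_set \<eta>) = p \<and> F = flower_of \<eta>)"

end

theory Submission
  imports Defs
begin

lemma ps_split: "1 \<le> (i::nat) \<Longrightarrow> i \<le> k \<Longrightarrow> (\<Sum>j=1..<k. f j) = (\<Sum>j=1..<i. f j) + (\<Sum>j=i..<k. (f j::real))"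
  using sum.atLeastLessThan_concat[of 1 i k f] by simp

lemma ps_nonneg: "\<forall>j\<in>{1..m}. f j > (0::real) \<Longrightarrow> 1 \<le> i \<Longrightarrow> k \<le> Suc m \<Longrightarrow> (\<Sum>j=i..<k. f j) \<ge> 0"
  by (intro sum_nonneg) (force intro: less_imp_le)

lemma ps_ge_first: "\<forall>j\<in>{1..m}. f j > (0::real) \<Longrightarrow> 1 \<le> i \<Longrightarrow> i < k \<Longrightarrow> k \<le> Suc m \<Longrightarrow> (\<Sum>j=i..<k. f j) \<ge> f i"
proof -
  assume h: "\<forall>j\<in>{1..m}. f j > (0::real)" "1 \<le> i" "i < k" "k \<le> Suc m"
  have "(\<Sum>j=i..<k. f j) = f i + (\<Sum>j=Suc i..<k. f j)" using h by (simp add: sum.atLeast_Suc_lessThan)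
  moreover have "(\<Sum>j=Suc i..<k. f j) \<ge> 0" using h by (intro sum_nonneg) (force intro: less_imp_le)
  ultimately show ?thesis by simp
qed

lemma ps_mono: "\<forall>j\<in>{1..m}. f j > (0::real) \<Longrightarrow> 1 \<le> i \<Longrightarrow> i \<le> k \<Longrightarrow> k \<le> Suc m \<Longrightarrow> (\<Sum>j=1..<i. f j) \<le> (\<Sum>j=1..<k. f j)"
  using ps_split[of i k f] ps_nonneg[of m f i k] by simp

lemma ps_strict: "\<forall>j\<in>{1..m}. f j > (0::real) \<Longrightarrow> 1 \<le> i \<Longrightarrow> i < k \<Longrightarrow> k \<le> Suc m \<Longrightarrow> (\<Sum>j=1..<i. f j) + f i \<le> (\<Sum>j=1..<k. f j)"
  using ps_split[of i k f] ps_ge_first[of m f i k] by simp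

lemma ps_locate:
  assumes "\<forall>j\<in>{1..m}. f j > (0::real)" "0 \<le> x" "x < (\<Sum>j=1..<Suc m. f j)"
  shows "\<exists>i\<in>{1..m}. (\<Sum>j=1..<i. f j) \<le> x \<and> x < (\<Sum>j=1..<Suc i. f j)"
proof -
  have "\<forall>n\<le>m. x < (\<Sum>j=1..<Suc n. f j) \<longrightarrow> (\<exists>i\<in>{1..n}. (\<Sum>j=1..<i. f j) \<le> x \<and> x < (\<Sum>j=1..<Suc i. f j))"
  proof (intro allI)
    fix n show "n \<le> m \<longrightarrow> x < (\<Sum>j=1..<Suc n. f j) \<longrightarrow> (\<exists>i\<in>{1..n}. (\<Sum>j=1..<i. f j) \<le> x \<and> x < (\<Sum>j=1..<Suc i. f j))"
    proof (induction n)
      case 0 then show ?case using assms by simp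
    next
      case (Suc n)
      show ?case
      proof (intro impI)
        assume h: "Suc n \<le> m" "x < (\<Sum>j=1..<Suc (Suc n). f j)"
        show "\<exists>i\<in>{1..Suc n}. (\<Sum>j=1..<i. f j) \<le> x \<and> x < (\<Sum>j=1..<Suc i. f j)"
        proof (cases "x < (\<Sum>j=1..<Suc n. f j)")
          case True then show ?thesis using Suc h by force
        next
          case False then show ?thesis using h by (intro bexI[of _ "Suc n"]) auto
        qed
      qed
    qed
  qed
  then show ?thesis using assms by auto
qed

lemma ps_unique:
  assumes "\<forall>j\<in>{1..m}. f j > (0::real)" "i \<in> {1..m}" "k \<in> {1..m}"
    "(\<Sum>j=1..<i. f j) \<le> x" "x < (\<Sum>j=1..<Suc i. f j)"
    "(\<Sum>j=1..<k. f j) \<le> x" "x < (\<Sum>j=1..<Suc k. f j)"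
  shows "i = k"
proof (rule ccontr)
  assume "i \<noteq> k"
  then consider "i < k" | "k < i" by linarith
  then show False
  proof cases
    case 1 then have "(\<Sum>j=1..<Suc i. f j) \<le> (\<Sum>j=1..<k. f j)"
      using assms by (intro ps_mono[of m]) auto
    then show False using assms by linarith
  next
    case 2 then have "(\<Sum>j=1..<Suc k. f j) \<le> (\<Sum>j=1..<i. f j)"
      using assms by (intro ps_mono[of m]) auto
    then show False using assms by linarith
  qed
qed

locale deck =
  fixes m :: nat and a b :: "nat \<Rightarrow> real"
  assumes m1: "m \<ge> 1" and pos: "\<forall>i\<in>{1..m}. a i > 0 \<and> b i > 0"
    and tot: "(\<Sum>i=1..m. a i) + (\<Sum>i=1..m. b i) = 1"
begin

abbreviation T where "T \<equiv> deck_shuffler m a b"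
abbreviation H where "H \<equiv> H_map m a b"
definition sa where "sa i = (\<Sum>j=1..<i. a j)"
definition sb where "sb i = (\<Sum>j=1..<i. b j)"
abbreviation al where "al \<equiv> sa (Suc m)"

lemma apos: "\<forall>j\<in>{1..m}. a j > 0" using pos by auto
lemma bpos: "\<forall>j\<in>{1..m}. b j > 0" using pos by auto

lemma sum_tot: "al + sb (Suc m) = 1"
  using tot unfolding sa_def sb_def by (simp add: atLeastLessThanSuc_atLeastAtMost)

lemma sa1[simp]: "sa 1 = 0" and sb1[simp]: "sb 1 = 0" by (simp_all add: sa_def sb_def)

lemma sa_mono: "1 \<le> i \<Longrightarrow> i \<le> k \<Longrightarrow> k \<le> Suc m \<Longrightarrow> sa i \<le> sa k"
  unfolding sa_def using ps_mono[OF apos] by blast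
lemma sb_mono: "1 \<le> i \<Longrightarrow> i \<le> k \<Longrightarrow> k \<le> Suc m \<Longrightarrow> sb i \<le> sb k"
  unfolding sb_def using ps_mono[OF bpos] by blast
lemma sa_strict: "1 \<le> i \<Longrightarrow> i < k \<Longrightarrow> k \<le> Suc m \<Longrightarrow> sa i + a i \<le> sa k"
  unfolding sa_def using ps_strict[OF apos] by blast
lemma sb_strict: "1 \<le> i \<Longrightarrow> i < k \<Longrightarrow> k \<le> Suc m \<Longrightarrow> sb i + b i \<le> sb k"
  unfolding sb_def using ps_strict[OF bpos] by blast
lemma sa_Suc: "1 \<le> i \<Longrightarrow> sa (Suc i) = sa i + a i" unfolding sa_def by simp
lemma sb_Suc: "1 \<le> i \<Longrightarrow> sb (Suc i) = sb i + b i" unfolding sb_def by simp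

lemma sa_nonneg: "k \<le> Suc m \<Longrightarrow> 0 \<le> sa k"
  using sa_mono[of 1 k] by (cases k) (auto simp: sa_def)
lemma sb_nonneg: "k \<le> Suc m \<Longrightarrow> 0 \<le> sb k"
  using sb_mono[of 1 k] by (cases k) (auto simp: sb_def)

lemma Aint_eq: "Aint a i = {sa i..<sa (Suc i)}"
  unfolding Aint_def sa_def by (simp add: atLeastLessThanSuc_atLeastAtMost)
lemma Bint_eq: "Bint m a b i = {al + sb i..<al + sb (Suc i)}"
  unfolding Bint_def sa_def sb_def by (simp add: atLeastLessThanSuc_atLeastAtMost)

lemma A_locate: assumes "0 \<le> x" "x < al" shows "\<exists>i\<in>{1..m}. x \<in> Aint a i"
proof -
  obtain i where "i\<in>{1..m}" "(\<Sum>j=1..<i. a j) \<le> x" "x < (\<Sum>j=1..<Suc i. a j)"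
    using ps_locate[OF apos, of x] assms unfolding sa_def by blast
  then show ?thesis unfolding Aint_eq sa_def by (intro bexI[of _ i]) auto
qed

lemma B_locate: assumes "al \<le> x" "x < 1" shows "\<exists>i\<in>{1..m}. x \<in> Bint m a b i"
proof -
  obtain i where "i\<in>{1..m}" "(\<Sum>j=1..<i. b j) \<le> x - al" "x - al < (\<Sum>j=1..<Suc i. b j)"
    using ps_locate[OF bpos, of "x - al"] assms sum_tot unfolding sb_def by force
  then show ?thesis unfolding Bint_eq sb_def by force
qed

lemma A_unique: "i \<in> {1..m} \<Longrightarrow> k \<in> {1..m} \<Longrightarrow> x \<in> Aint a i \<Longrightarrow> x \<in> Aint a k \<Longrightarrow> i = k"
  unfolding Aint_eq sa_def by (rule ps_unique[OF apos, of i k x]) auto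

lemma B_unique: "i \<in> {1..m} \<Longrightarrow> k \<in> {1..m} \<Longrightarrow> x \<in> Bint m a b i \<Longrightarrow> x \<in> Bint m a b k \<Longrightarrow> i = k"
  unfolding Bint_eq sb_def by (rule ps_unique[OF bpos, of i k "x - al"]) auto

lemma A_range: "i \<in> {1..m} \<Longrightarrow> x \<in> Aint a i \<Longrightarrow> 0 \<le> x \<and> x < al"
  unfolding Aint_eq using sa_nonneg[of i] sa_mono[of "Suc i" "Suc m"] by auto

lemma B_range: "i \<in> {1..m} \<Longrightarrow> x \<in> Bint m a b i \<Longrightarrow> al \<le> x \<and> x < 1"
  unfolding Bint_eq using sb_nonneg[of i] sb_mono[of "Suc i" "Suc m"] sum_tot by auto

lemma Bset_iff: "x \<in> Bset m a b \<longleftrightarrow> al \<le> x \<and> x < 1"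
  unfolding Bset_def using B_range B_locate by blast

lemma suma_tail: "i \<in> {1..m} \<Longrightarrow> (\<Sum>j=i..m. a j) = al - sa i"
  unfolding sa_def using ps_split[of i "Suc m" a] by (simp add: atLeastLessThanSuc_atLeastAtMost)

lemma T_A: assumes "i \<in> {1..m}" "x \<in> Aint a i" shows "T x = x + sb (Suc i)"
proof -
  have "\<forall>k\<in>{1..m}. (if x \<in> Aint a k then (\<Sum>j=1..k. b j) else 0) - (if x \<in> Bint m a b k then (\<Sum>j=k..m. a j) else 0)
     = (if k = i then sb (Suc i) else 0)"
  proof
    fix k assume k: "k \<in> {1..m}"
    have "x \<notin> Bint m a b k" using B_range[OF k, of x] A_range[OF assms] by auto
    moreover have "x \<in> Aint a k \<longleftrightarrow> k = i" using A_unique[OF k assms(1) _ assms(2)] assms by auto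
    ultimately show "(if x \<in> Aint a k then (\<Sum>j=1..k. b j) else 0) - (if x \<in> Bint m a b k then (\<Sum>j=k..m. a j) else 0)
     = (if k = i then sb (Suc i) else 0)" by (simp add: sb_def atLeastLessThanSuc_atLeastAtMost)
  qed
  then have "(\<Sum>k=1..m. (if x \<in> Aint a k then (\<Sum>j=1..k. b j) else 0) - (if x \<in> Bint m a b k then (\<Sum>j=k..m. a j) else 0))
     = (\<Sum>k=1..m. (if k = i then sb (Suc i) else 0))" by (intro sum.cong) auto
  also have "\<dots> = sb (Suc i)" using assms(1) by simp
  finally show ?thesis unfolding deck_shuffler_def by simp
qed

lemma T_B: assumes "i \<in> {1..m}" "x \<in> Bint m a b i" shows "T x = x - (al - sa i)"
proof -
  have "\<forall>k\<in>{1..m}. (if x \<in> Aint a k then (\<Sum>j=1..k. b j) else 0) - (if x \<in> Bint m a b k then (\<Sum>j=k..m. a j) else 0)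
     = (if k = i then - (al - sa i) else 0)"
  proof
    fix k assume k: "k \<in> {1..m}"
    have "x \<notin> Aint a k" using B_range[OF assms] A_range[OF k, of x] by auto
    moreover have "x \<in> Bint m a b k \<longleftrightarrow> k = i" using B_unique[OF k assms(1) _ assms(2)] assms by auto
    ultimately show "(if x \<in> Aint a k then (\<Sum>j=1..k. b j) else 0) - (if x \<in> Bint m a b k then (\<Sum>j=k..m. a j) else 0)
     = (if k = i then - (al - sa i) else 0)" using suma_tail[OF k] by auto
  qed
  then have "(\<Sum>k=1..m. (if x \<in> Aint a k then (\<Sum>j=1..k. b j) else 0) - (if x \<in> Bint m a b k then (\<Sum>j=k..m. a j) else 0))
     = (\<Sum>k=1..m. (if k = i then - (al - sa i) else 0))" by (intro sum.cong) auto
  also have "\<dots> = - (al - sa i)" using assms(1) by simp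
  finally show ?thesis unfolding deck_shuffler_def by simp
qed

end

context deck begin

definition P where "P k = sa (k div 2 + 1) + sb ((k+1) div 2 + 1)"

lemma P0[simp]: "P 0 = 0" by (simp add: P_def sa_def sb_def)
lemma P2m: "P (2*m) = 1" using sum_tot by (simp add: P_def)

lemma P_Suc: assumes "k < 2*m" shows "P k < P (Suc k)"
proof (cases "even k")
  case True
  then obtain j where j: "k = 2*j" by blast
  then have "j + 1 \<le> m" using assms by simp
  then have "b (j+1) > 0" using bpos by simp
  moreover have "P k = sa (j+1) + sb (j+1)" "P (Suc k) = sa (j+1) + sb (j+2)" using j by (simp_all add: P_def)
  moreover have "sb (j+2) = sb (j+1) + b (j+1)" using sb_Suc[of "j+1"] by simp
  ultimately show ?thesis by simp
next
  case False
  then obtain j where j: "k = 2*j+1" using oddE by blast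
  then have "j + 1 \<le> m" using assms by simp
  then have "a (j+1) > 0" using apos by simp
  moreover have "P k = sa (j+1) + sb (j+2)" "P (Suc k) = sa (j+2) + sb (j+2)" using j by (simp_all add: P_def)
  moreover have "sa (j+2) = sa (j+1) + a (j+1)" using sa_Suc[of "j+1"] by simp
  ultimately show ?thesis by simp
qed

lemma P_strict: "k < k' \<Longrightarrow> k' \<le> 2*m \<Longrightarrow> P k < P k'"
proof (induction k' arbitrary: k)
  case 0 then show ?case by simp
next
  case (Suc k')
  show ?case
  proof (cases "k = k'")
    case True then show ?thesis using P_Suc Suc by simp
  next
    case False then have "P k < P k'" using Suc by simp
    then show ?thesis using P_Suc[of k'] Suc by simp
  qed
qed

lemma P_mono: "k \<le> k' \<Longrightarrow> k' \<le> 2*m \<Longrightarrow> P k \<le> P k'"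
  using P_strict[of k k'] by (cases "k = k'") auto

lemma P_range: "k \<le> 2*m \<Longrightarrow> 0 \<le> P k \<and> P k \<le> 1"
  using P_mono[of 0 k] P_mono[of k "2*m"] P2m by simp

lemma P_lt1: "k < 2*m \<Longrightarrow> P k < 1"
  using P_strict[of k "2*m"] P2m by simp

lemma P_unique: "k \<in> {1..2*m} \<Longrightarrow> k' \<in> {1..2*m} \<Longrightarrow> P (k-1) \<le> t \<Longrightarrow> t < P k \<Longrightarrow> P (k'-1) \<le> t \<Longrightarrow> t < P k' \<Longrightarrow> k = k'"
proof (rule ccontr)
  assume h: "k \<in> {1..2*m}" "k' \<in> {1..2*m}" "P (k-1) \<le> t" "t < P k" "P (k'-1) \<le> t" "t < P k'" "k \<noteq> k'"
  then consider "k < k'" | "k' < k" by linarith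
  then show False
  proof cases
    case 1 then have "P k \<le> P (k'-1)" using h by (intro P_mono) auto
    then show False using h by linarith
  next
    case 2 then have "P k' \<le> P (k-1)" using h by (intro P_mono) auto
    then show False using h by linarith
  qed
qed

lemma piece_cases: assumes "0 \<le> x" "x < 1" shows "(\<exists>i\<in>{1..m}. x \<in> Aint a i \<and> x < al) \<or> (\<exists>i\<in>{1..m}. x \<in> Bint m a b i \<and> al \<le> x)"
proof (cases "x < al")
  case True then show ?thesis using A_locate[OF assms(1) True] by blast
next
  case False then show ?thesis using B_locate[of x] assms by auto
qed

lemma TA_img: assumes "i \<in> {1..m}" "x \<in> Aint a i" shows "P (2*i-1) \<le> T x \<and> T x < P (2*i)"
proof -
  obtain j where j: "i = Suc j" using assms by (cases i) auto
  have "P (2*i-1) = sa i + sb (Suc i)" "P (2*i) = sa (Suc i) + sb (Suc i)" using j by (simp_all add: P_def)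
  then show ?thesis using T_A[OF assms] assms(2) unfolding Aint_eq by auto
qed

lemma TB_img: assumes "i \<in> {1..m}" "x \<in> Bint m a b i" shows "P (2*i-2) \<le> T x \<and> T x < P (2*i-1)"
proof -
  obtain j where j: "i = Suc j" using assms by (cases i) auto
  have "P (2*i-2) = sa i + sb i" "P (2*i-1) = sa i + sb (Suc i)" using j by (simp_all add: P_def)
  then show ?thesis using T_B[OF assms] assms(2) unfolding Bint_eq by auto
qed

lemma T_img: assumes "0 \<le> x" "x < 1"
  shows "\<exists>k\<in>{1..2*m}. P (k-1) \<le> T x \<and> T x < P k \<and> (odd k \<longleftrightarrow> al \<le> x)"
  using piece_cases[OF assms]
proof
  assume "\<exists>i\<in>{1..m}. x \<in> Aint a i \<and> x < al"
  then obtain i where i: "i\<in>{1..m}" "x \<in> Aint a i" "x < al" by blast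
  show ?thesis using TA_img[OF i(1,2)] i by (intro bexI[of _ "2*i"]) auto
next
  assume "\<exists>i\<in>{1..m}. x \<in> Bint m a b i \<and> al \<le> x"
  then obtain i where i: "i\<in>{1..m}" "x \<in> Bint m a b i" "al \<le> x" by blast
  have "2*i-1-1 = 2*i-2" by simp
  then show ?thesis using TB_img[OF i(1,2)] i by (intro bexI[of _ "2*i-1"]) auto
qed

lemma T_range: "0 \<le> x \<Longrightarrow> x < 1 \<Longrightarrow> 0 \<le> T x \<and> T x < 1"
proof -
  assume "0 \<le> x" "x < 1"
  then obtain k where k: "k\<in>{1..2*m}" "P (k-1) \<le> T x" "T x < P k" using T_img by blast
  have "k - 1 \<le> 2*m" using k by (metis atLeastAtMost_iff diff_le_self le_trans)
  then show ?thesis using P_range[of "k-1"] P_range[of k] k by auto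
qed

end

context deck begin

lemma T_sa: "i \<in> {1..m} \<Longrightarrow> T (sa i) = P (2*i-1)"
proof -
  assume i: "i \<in> {1..m}"
  then have "sa i \<in> Aint a i" unfolding Aint_eq using sa_Suc[of i] apos by auto
  moreover obtain j where j: "i = Suc j" using i by (cases i) auto
  ultimately show ?thesis using T_A[OF i] by (simp add: P_def)
qed

lemma T_sb: "i \<in> {1..m} \<Longrightarrow> T (al + sb i) = P (2*i-2)"
proof -
  assume i: "i \<in> {1..m}"
  then have "al + sb i \<in> Bint m a b i" unfolding Bint_eq using sb_Suc[of i] bpos by auto
  moreover obtain j where j: "i = Suc j" using i by (cases i) auto
  ultimately show ?thesis using T_B[OF i] by (simp add: P_def)
qed

end

context deck begin

definition samepiece where "samepiece x y \<longleftrightarrow> (\<exists>i\<in>{1..m}. x \<in> Aint a i \<and> y \<in> Aint a i) \<or> (\<exists>i\<in>{1..m}. x \<in> Bint m a b i \<and> y \<in> Bint m a b i)"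

lemma samepiece_T: assumes "samepiece x y" shows "T y - T x = y - x"
  using assms unfolding samepiece_def
proof
  assume "\<exists>i\<in>{1..m}. x \<in> Aint a i \<and> y \<in> Aint a i"
  then obtain i where "i\<in>{1..m}" "x \<in> Aint a i" "y \<in> Aint a i" by blast
  then show ?thesis using T_A[of i x] T_A[of i y] by simp
next
  assume "\<exists>i\<in>{1..m}. x \<in> Bint m a b i \<and> y \<in> Bint m a b i"
  then obtain i where "i\<in>{1..m}" "x \<in> Bint m a b i" "y \<in> Bint m a b i" by blast
  then show ?thesis using T_B[of i x] T_B[of i y] by simp
qed

lemma samepiece_between: assumes "samepiece x y" "x \<le> z" "z \<le> y" shows "samepiece x z"
  using assms(1)[unfolded samepiece_def]
proof
  assume "\<exists>i\<in>{1..m}. x \<in> Aint a i \<and> y \<in> Aint a i"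
  then obtain i where "i\<in>{1..m}" "x \<in> Aint a i" "y \<in> Aint a i" by blast
  then have "z \<in> Aint a i" using assms unfolding Aint_eq by auto
  then show ?thesis unfolding samepiece_def using \<open>i\<in>{1..m}\<close> \<open>x \<in> Aint a i\<close> by blast
next
  assume "\<exists>i\<in>{1..m}. x \<in> Bint m a b i \<and> y \<in> Bint m a b i"
  then obtain i where "i\<in>{1..m}" "x \<in> Bint m a b i" "y \<in> Bint m a b i" by blast
  then have "z \<in> Bint m a b i" using assms unfolding Bint_eq by auto
  then show ?thesis unfolding samepiece_def using \<open>i\<in>{1..m}\<close> \<open>x \<in> Bint m a b i\<close> by blast
qed

definition dl where "dl = Min (a ` {1..m} \<union> b ` {1..m})"

lemma dl_pos: "dl > 0"
proof -
  have "dl \<in> a ` {1..m} \<union> b ` {1..m}" unfolding dl_def using m1 by (intro Min_in) auto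
  then show ?thesis using apos bpos by auto
qed

lemma dl_le: "i \<in> {1..m} \<Longrightarrow> dl \<le> a i \<and> dl \<le> b i"
  unfolding dl_def by (auto intro: Min_le)

end

context deck begin

lemma T_order: assumes "0 \<le> x" "x < y" "y < 1" "al \<le> x \<longleftrightarrow> al \<le> y"
  shows "T y - T x \<ge> y - x \<and> (\<not> samepiece x y \<longrightarrow> T y - T x \<ge> y - x + dl)"
proof (cases "al \<le> x")
  case False
  then have "x < al" "y < al" using assms by auto
  obtain i where i: "i \<in> {1..m}" "x \<in> Aint a i" using A_locate assms \<open>x < al\<close> by blast
  obtain j where j: "j \<in> {1..m}" "y \<in> Aint a j" using A_locate[of y] assms \<open>y < al\<close> by auto
  note ij = i j
  have "i \<le> j"
  proof (rule ccontr)
    assume "\<not> i \<le> j"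
    then have "sa (Suc j) \<le> sa i" using ij by (intro sa_mono) auto
    then show False using ij assms unfolding Aint_eq by auto
  qed
  have e: "T y - T x = y - x + (sb (Suc j) - sb (Suc i))" using T_A[OF ij(1,2)] T_A[OF ij(3,4)] by simp
  show ?thesis
  proof (cases "i = j")
    case True then have "samepiece x y" using ij unfolding samepiece_def by blast
    then show ?thesis using e True by simp
  next
    case False
    then have "sb (Suc i) + b (Suc i) \<le> sb (Suc j)" using ij \<open>i \<le> j\<close> by (intro sb_strict) auto
    moreover have "dl \<le> b (Suc i)" using dl_le[of "Suc i"] ij \<open>i \<le> j\<close> False by auto
    ultimately show ?thesis using e dl_pos by simp
  qed
next
  case True
  then have "al \<le> x" "al \<le> y" using assms by auto
  obtain i where i: "i \<in> {1..m}" "x \<in> Bint m a b i" using B_locate[of x] assms \<open>al \<le> x\<close> by auto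
  obtain j where j: "j \<in> {1..m}" "y \<in> Bint m a b j" using B_locate[of y] assms \<open>al \<le> y\<close> by auto
  note ij = i j
  have "i \<le> j"
  proof (rule ccontr)
    assume "\<not> i \<le> j"
    then have "sb (Suc j) \<le> sb i" using ij by (intro sb_mono) auto
    then show False using ij assms unfolding Bint_eq by auto
  qed
  have e: "T y - T x = y - x + (sa j - sa i)" using T_B[OF ij(1,2)] T_B[OF ij(3,4)] by simp
  show ?thesis
  proof (cases "i = j")
    case True then have "samepiece x y" using ij unfolding samepiece_def by blast
    then show ?thesis using e True by simp
  next
    case False
    then have "sa i + a i \<le> sa j" using ij \<open>i \<le> j\<close> by (intro sa_strict) auto
    moreover have "dl \<le> a i" using dl_le[of i] ij by auto
    ultimately show ?thesis using e dl_pos by simp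
  qed
qed

end

context deck begin

lemma T_inj: assumes "0 \<le> x" "x < 1" "0 \<le> y" "y < 1" "T x = T y" shows "x = y"
proof -
  have main: "False" if h: "0 \<le> u" "u < v" "v < 1" "T u = T v" for u v
  proof (cases "al \<le> u \<longleftrightarrow> al \<le> v")
    case True then show False using T_order[OF h(1-3) True] h by simp
  next
    case False
    have u: "0 \<le> u" "u < 1" and v: "0 \<le> v" "v < 1" using h by auto
    obtain k where k: "k\<in>{1..2*m}" "P (k-1) \<le> T u" "T u < P k" "odd k \<longleftrightarrow> al \<le> u" using T_img[OF u] by blast
    obtain k' where k': "k'\<in>{1..2*m}" "P (k'-1) \<le> T v" "T v < P k'" "odd k' \<longleftrightarrow> al \<le> v" using T_img[OF v] by blast
    have "k = k'" using P_unique[OF k(1) k'(1) k(2,3)] k'(2,3) h(4) by simp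
    then show False using k k' False by simp
  qed
  show ?thesis
  proof (rule ccontr)
    assume "x \<noteq> y"
    then consider "x < y" | "y < x" by linarith
    then show False
    proof cases
      case 1 then show False using main[of x y] assms by simp
    next
      case 2 then show False using main[of y x] assms by simp
    qed
  qed
qed

end

context deck begin

definition hf where "hf x n = indicator (Bset m a b) ((T^^n) x) / (2::real)^(Suc n)"

lemma sa_Suc0[simp]: "sa (Suc 0) = 0" by (simp add: sa_def)
lemma sb_Suc0[simp]: "sb (Suc 0) = 0" by (simp add: sb_def)

lemma H_eq: "H x = suminf (hf x)" unfolding H_map_def hf_def[abs_def] by simp

lemma geo_eq: "(\<lambda>n. 1/(2::real)^Suc n) = (\<lambda>n. (1/2)^n / 2)"
  by (simp add: power_one_over algebra_simps)

lemma geo_summable: "summable (\<lambda>n. 1/(2::real)^Suc n)"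
  unfolding geo_eq by (intro summable_divide summable_geometric) simp

lemma geo_sum: "(\<Sum>n. 1/(2::real)^Suc n) = 1"
proof -
  have "(\<Sum>n. (1/2::real)^n / 2) = (\<Sum>n. (1/2::real)^n) / 2"
    by (intro suminf_divide summable_geometric) simp
  also have "\<dots> = 1" using suminf_geometric[of "1/2::real"] by simp
  finally show ?thesis unfolding geo_eq .
qed

lemma hf_nonneg: "0 \<le> hf x n" by (simp add: hf_def)
lemma hf_le: "hf x n \<le> 1/2^Suc n" by (simp add: hf_def indicator_def divide_le_cancel)

lemma hf_summable: "summable (hf x)"
  by (rule summable_comparison_test'[OF geo_summable]) (use hf_nonneg hf_le in auto)

lemma ind_eq: "0 \<le> x \<Longrightarrow> x < 1 \<Longrightarrow> indicator (Bset m a b) x = (if al \<le> x then 1 else (0::real))"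
  using Bset_iff by (simp add: indicator_def)

lemma H_rec: "H x = indicator (Bset m a b) x / 2 + H (T x) / 2"
proof -
  have e: "(\<lambda>n. hf x (Suc n)) = (\<lambda>n. hf (T x) n / 2)"
    by (simp add: hf_def funpow_swap1)
  have "(\<Sum>n. hf x (Suc n)) = H x - hf x 0" unfolding H_eq by (rule suminf_split_head[OF hf_summable])
  moreover have "(\<Sum>n. hf (T x) n / 2) = H (T x) / 2" unfolding H_eq by (rule suminf_divide[OF hf_summable])
  ultimately show ?thesis unfolding e by (simp add: hf_def)
qed

lemma Tn_range: "0 \<le> x \<Longrightarrow> x < 1 \<Longrightarrow> 0 \<le> (T^^n) x \<and> (T^^n) x < 1"
  by (induction n) (auto simp: T_range)

lemma T_A_step: assumes "0 \<le> y" "y < al" shows "T y \<ge> y + dl"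
proof -
  obtain i where i: "i \<in> {1..m}" "y \<in> Aint a i" using A_locate assms by blast
  have "sb 1 + b 1 \<le> sb (Suc i)" using i by (intro sb_strict) auto
  moreover have "dl \<le> b 1" using dl_le[of 1] m1 by auto
  ultimately show ?thesis using T_A[OF i] by simp
qed

lemma T_B_step: assumes "al \<le> y" "y < 1" shows "T y \<le> y - dl"
proof -
  obtain i where i: "i \<in> {1..m}" "y \<in> Bint m a b i" using B_locate assms by blast
  have "sa i + a i \<le> sa (Suc m)" using i by (intro sa_strict) auto
  moreover have "dl \<le> a i" using dl_le[of i] i by auto
  ultimately show ?thesis using T_B[OF i] by simp
qed

lemma escape_A: assumes "0 \<le> x" "x < 1" shows "\<exists>n. al \<le> (T^^n) x"
proof (rule ccontr)
  assume "\<not> ?thesis"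
  then have A: "\<forall>n. (T^^n) x < al" by (simp add: not_le)
  have "\<forall>n. (T^^n) x \<ge> x + real n * dl"
  proof
    fix n show "(T^^n) x \<ge> x + real n * dl"
    proof (induction n)
      case 0 then show ?case by simp
    next
      case (Suc n)
      have "T ((T^^n) x) \<ge> (T^^n) x + dl" using T_A_step[of "(T^^n) x"] Tn_range[OF assms, of n] A by blast
      then show ?case using Suc by (simp add: algebra_simps)
    qed
  qed
  note all = this
  obtain n where "1 < real n * dl" using ex_less_of_nat_mult[OF dl_pos] by blast
  moreover have "(T^^n) x \<ge> x + real n * dl" using all by blast
  ultimately show False using Tn_range[OF assms, of n] assms by linarith
qed

lemma escape_B: assumes "0 \<le> x" "x < 1" shows "\<exists>n. (T^^n) x < al"
proof (rule ccontr)
  assume "\<not> ?thesis"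
  then have B: "\<forall>n. al \<le> (T^^n) x" by (simp add: not_less)
  have "\<forall>n. (T^^n) x \<le> x - real n * dl"
  proof
    fix n show "(T^^n) x \<le> x - real n * dl"
    proof (induction n)
      case 0 then show ?case by simp
    next
      case (Suc n)
      have "T ((T^^n) x) \<le> (T^^n) x - dl" using T_B_step[of "(T^^n) x"] Tn_range[OF assms, of n] B by blast
      then show ?case using Suc by (simp add: algebra_simps)
    qed
  qed
  note all = this
  obtain n where "1 < real n * dl" using ex_less_of_nat_mult[OF dl_pos] by blast
  moreover have "(T^^n) x \<le> x - real n * dl" using all by blast
  ultimately show False using Tn_range[OF assms, of n] assms by linarith
qed

lemma H_pos: assumes "0 \<le> x" "x < 1" shows "0 < H x"
proof -
  obtain n where n: "al \<le> (T^^n) x" using escape_A[OF assms] by blast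
  have "0 < hf x n" using n Tn_range[OF assms, of n] by (simp add: hf_def ind_eq)
  then show ?thesis unfolding H_eq using suminf_pos_iff[OF hf_summable hf_nonneg] by blast
qed

lemma H_lt1: assumes "0 \<le> x" "x < 1" shows "H x < 1"
proof -
  obtain n where n: "(T^^n) x < al" using escape_B[OF assms] by blast
  let ?g = "\<lambda>n. 1/(2::real)^Suc n - hf x n"
  have "0 < ?g n" using n Tn_range[OF assms, of n] by (simp add: hf_def ind_eq)
  moreover have "\<And>k. 0 \<le> ?g k" using hf_le by (simp add: algebra_simps)
  moreover have sg: "summable ?g" by (intro summable_diff geo_summable hf_summable)
  ultimately have "0 < suminf ?g" using suminf_pos_iff[OF sg] by blast
  moreover have "suminf ?g = (\<Sum>n. 1/(2::real)^Suc n) - suminf (hf x)"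
    by (rule suminf_diff[OF geo_summable hf_summable, symmetric])
  then have "suminf ?g = 1 - H x" by (simp only: geo_sum H_eq)
  ultimately show ?thesis by simp
qed

lemma H_A: "0 \<le> x \<Longrightarrow> x < al \<Longrightarrow> H x = H (T x) / 2"
  using H_rec[of x] ind_eq[of x] sum_tot sb_nonneg[of "Suc m"] by simp

lemma H_B: "al \<le> x \<Longrightarrow> x < 1 \<Longrightarrow> H x = 1/2 + H (T x) / 2"
  using H_rec[of x] ind_eq[of x] sa_nonneg[of "Suc m"] by simp

lemma al_lt1: "al < 1"
  using sum_tot sb_strict[of 1 "Suc m"] bpos[rule_format, of 1] m1 by auto

lemma al_pos: "0 < al"
  using sa_strict[of 1 "Suc m"] apos[rule_format, of 1] m1 by auto

lemma H_half_A: "0 \<le> x \<Longrightarrow> x < al \<Longrightarrow> H x < 1/2"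
  using H_A H_lt1[of "T x"] T_range[of x] al_lt1 by simp

lemma H_half_B: "al \<le> x \<Longrightarrow> x < 1 \<Longrightarrow> H x > 1/2"
  using H_B H_pos[of "T x"] T_range[of x] al_pos by simp

lemma H_mono_aux: "0 \<le> x \<Longrightarrow> x < y \<Longrightarrow> y < 1 \<Longrightarrow> H x \<le> H y + 1/2^n"
proof (induction n arbitrary: x y)
  case 0
  then show ?case using H_lt1[of x] H_pos[of y] by simp
next
  case (Suc n)
  note h = Suc.prems
  show ?case
  proof (cases "al \<le> x \<longleftrightarrow> al \<le> y")
    case True
    have "T y - T x \<ge> y - x" using T_order[OF h True] by simp
    then have "T x < T y" using h by simp
    moreover have "0 \<le> T x" "T y < 1" using T_range[of x] T_range[of y] h by auto
    ultimately have i: "H (T x) \<le> H (T y) + 1/2^n" using Suc.IH[of "T x" "T y"] by simp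
    have "H x - H y = (H (T x) - H (T y)) / 2"
      using H_rec[of x] H_rec[of y] ind_eq[of x] ind_eq[of y] h True by simp
    moreover have "(H (T x) - H (T y))/2 \<le> (1/2^n)/2"
      using i by (intro divide_right_mono) auto
    ultimately have "H x \<le> H y + (1/2^n)/2" by linarith
    then show ?thesis by simp
  next
    case False
    then have "x < al" "al \<le> y" using h by auto
    then have "H x < 1/2" "H y > 1/2" using H_half_A[of x] H_half_B[of y] h by auto
    moreover have "0 < (1::real)/2^Suc n" by simp
    ultimately show ?thesis by linarith
  qed
qed

lemma H_mono: assumes "0 \<le> x" "x \<le> y" "y < 1" shows "H x \<le> H y"
proof (cases "x = y")
  case False
  then have xy: "x < y" using assms by simp
  show ?thesis
  proof (rule ccontr)
    assume "\<not> H x \<le> H y"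
    then have "0 < H x - H y" by simp
    then obtain n where "(1/2::real)^n < H x - H y" using real_arch_pow_inv[of "H x - H y" "1/2"] by auto
    moreover have "H x \<le> H y + 1/2^n" using H_mono_aux[of x y n] assms xy by simp
    ultimately show False by (simp add: power_one_over)
  qed
qed simp

lemma H_same_side: assumes "0 \<le> x" "x < 1" "0 \<le> y" "y < 1" "H x = H y" shows "al \<le> x \<longleftrightarrow> al \<le> y"
proof (cases "al \<le> x")
  case True
  then have "H y > 1/2" using H_half_B[of x] assms by simp
  then have "\<not> y < al" using H_half_A[of y] assms by auto
  then show ?thesis using True by simp
next
  case False
  then have "H y < 1/2" using H_half_A[of x] assms by simp
  then have "\<not> al \<le> y" using H_half_B[of y] assms by auto
  then show ?thesis using False by simp
qed

lemma H_eq_codes: "0 \<le> x \<Longrightarrow> x < 1 \<Longrightarrow> 0 \<le> y \<Longrightarrow> y < 1 \<Longrightarrow> H x = H y \<Longrightarrow> (al \<le> (T^^n) x \<longleftrightarrow> al \<le> (T^^n) y)"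
proof (induction n arbitrary: x y)
  case 0
  then show ?case using H_same_side[of x y] by simp
next
  case (Suc n)
  note h = Suc.prems
  have s: "al \<le> x \<longleftrightarrow> al \<le> y" using H_same_side h by blast
  have "H (T x) = H (T y)" using H_rec[of x] H_rec[of y] ind_eq[of x] ind_eq[of y] h s by simp
  moreover have "0 \<le> T x" "T x < 1" "0 \<le> T y" "T y < 1" using T_range[of x] T_range[of y] h by auto
  ultimately have "al \<le> (T^^n) (T x) \<longleftrightarrow> al \<le> (T^^n) (T y)" using Suc.IH[of "T x" "T y"] by blast
  then show ?case by (simp add: funpow_swap1)
qed

end

lemma pigeon_real:
  fixes g :: "nat \<Rightarrow> real" and L :: real
  assumes "L > 0" "\<forall>n. 0 \<le> g n \<and> g n < 1"
  shows "\<exists>i j. i < j \<and> \<bar>g j - g i\<bar> < L"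
proof -
  define M where "M = nat \<lfloor>1 / L\<rfloor>"
  define f where "f j = nat \<lfloor>g j / L\<rfloor>" for j
  have fM: "f j \<in> {0..M}" for j
  proof -
    have "g j / L \<le> 1 / L" using assms(1) assms(2)[rule_format, of j] by (intro divide_right_mono) auto
    then show ?thesis unfolding f_def M_def by (simp add: floor_mono nat_mono)
  qed
  have "\<not> inj_on f {0..Suc M}"
  proof
    assume "inj_on f {0..Suc M}"
    moreover have "f ` {0..Suc M} \<subseteq> {0..M}" using fM by auto
    ultimately have "card {0..Suc M} \<le> card {0..M}" by (intro card_inj_on_le) auto
    then show False by simp
  qed
  then obtain i j where ij: "i \<noteq> j" "f i = f j" unfolding inj_on_def by blast
  have gi: "0 \<le> g i / L" "0 \<le> g j / L" using assms by auto
  have "0 \<le> \<lfloor>g i / L\<rfloor>" "0 \<le> \<lfloor>g j / L\<rfloor>" using gi by simp_all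
  then have "\<lfloor>g i / L\<rfloor> = \<lfloor>g j / L\<rfloor>" using ij(2) unfolding f_def by (simp add: eq_nat_nat_iff)
  then have "\<bar>g i / L - g j / L\<bar> < 1" by linarith
  then have "\<bar>g i - g j\<bar> / L < 1" using assms by (simp add: diff_divide_distrib[symmetric])
  then have "\<bar>g i - g j\<bar> < L" using assms by simp
  show ?thesis
  proof (cases "i < j")
    case True then show ?thesis using \<open>\<bar>g i - g j\<bar> < L\<close> by (auto simp: abs_minus_commute)
  next
    case False then have "j < i" using ij(1) by simp
    then show ?thesis using \<open>\<bar>g i - g j\<bar> < L\<close> by auto
  qed
qed

context deck begin

lemma Tn_inj: "0 \<le> x \<Longrightarrow> x < 1 \<Longrightarrow> 0 \<le> y \<Longrightarrow> y < 1 \<Longrightarrow> (T^^n) x = (T^^n) y \<Longrightarrow> x = y"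
proof (induction n arbitrary: x y)
  case 0 then show ?case by simp
next
  case (Suc n)
  have "T x = T y" using Suc.IH[of "T x" "T y"] Suc.prems T_range[of x] T_range[of y]
    by (simp add: funpow_swap1)
  then show ?case using T_inj Suc.prems by blast
qed

lemma recur:
  assumes u: "0 \<le> u" and uv: "u < v" and v: "v < 1"
    and codes: "\<forall>n. al \<le> (T^^n) u \<longleftrightarrow> al \<le> (T^^n) v"
  shows "\<exists>e\<ge>1. (T^^e) u = u \<and> (T^^e) v = v"
proof -
  define X where "X n = (T^^n) u" for n
  define Y where "Y n = (T^^n) v" for n
  define D where "D n = Y n - X n" for n
  have rng: "0 \<le> X n \<and> X n < 1 \<and> 0 \<le> Y n \<and> Y n < 1" for n
    unfolding X_def Y_def using Tn_range[of u n] Tn_range[of v n] u uv v by auto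
  have XS: "X (Suc n) = T (X n)" and YS: "Y (Suc n) = T (Y n)" for n
    unfolding X_def Y_def by simp_all
  have cn: "al \<le> X n \<longleftrightarrow> al \<le> Y n" for n unfolding X_def Y_def using codes by blast
  have lt: "X n < Y n" for n
  proof (induction n)
    case 0 then show ?case using uv by (simp add: X_def Y_def)
  next
    case (Suc n)
    have "T (Y n) - T (X n) \<ge> Y n - X n" using T_order[of "X n" "Y n"] rng Suc cn by blast
    then show ?case using Suc XS YS by simp
  qed
  have stepD: "D n \<le> D (Suc n) \<and> (\<not> samepiece (X n) (Y n) \<longrightarrow> D n + dl \<le> D (Suc n))" for n
    using T_order[of "X n" "Y n"] rng lt cn unfolding D_def XS YS by blast
  have Dmono: "n \<le> n' \<Longrightarrow> D n \<le> D n'" for n n'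
    using lift_Suc_mono_le[of D n n'] stepD by blast
  have D_lt1: "D n < 1" for n using rng[of n] unfolding D_def by linarith
  have D0: "0 < D 0" using lt[of 0] unfolding D_def by simp
  have "\<exists>N. \<forall>n\<ge>N. samepiece (X n) (Y n)"
  proof (rule ccontr)
    assume "\<not> ?thesis"
    then have inf: "\<forall>N. \<exists>n\<ge>N. \<not> samepiece (X n) (Y n)" by blast
    have big: "\<exists>n. D n \<ge> real k * dl" for k
    proof (induction k)
      case 0 then show ?case using D0 by (intro exI[of _ 0]) simp
    next
      case (Suc k)
      then obtain n where n: "D n \<ge> real k * dl" by blast
      obtain n' where n': "n' \<ge> n" "\<not> samepiece (X n') (Y n')" using inf by blast
      have "D (Suc n') \<ge> D n' + dl" using stepD n' by blast
      moreover have "D n' \<ge> D n" using Dmono n' by blast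
      ultimately have "D (Suc n') \<ge> real (Suc k) * dl" using n by (simp add: algebra_simps)
      then show ?case by blast
    qed
    obtain k where k: "1 < real k * dl" using ex_less_of_nat_mult[OF dl_pos] by blast
    obtain n where "D n \<ge> real k * dl" using big[of k] by blast
    then show False using D_lt1[of n] k by linarith
  qed
  then obtain N where N: "\<forall>n\<ge>N. samepiece (X n) (Y n)" by blast
  define L where "L = D N"
  have DL: "D n = L" if "n \<ge> N" for n
  proof -
    have "D (N + k) = D N" for k
    proof (induction k)
      case 0 then show ?case by simp
    next
      case (Suc k)
      have "samepiece (X (N+k)) (Y (N+k))" using N by simp
      then have "T (Y (N+k)) - T (X (N+k)) = Y (N+k) - X (N+k)" by (rule samepiece_T)
      then show ?case using Suc unfolding D_def by (simp add: XS YS)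
    qed
    then show ?thesis unfolding L_def using that by (metis le_add_diff_inverse)
  qed
  have Lpos: "L > 0" unfolding L_def D_def using lt[of N] by simp
  have transl: "T z = z + (X (Suc n) - X n)" "X (Suc n) \<le> T z \<and> T z \<le> X (Suc n) + L"
    if "n \<ge> N" "X n \<le> z" "z \<le> X n + L" for n z
  proof -
    have "Y n = X n + L" using DL[OF that(1)] unfolding D_def by simp
    then have "samepiece (X n) z" using samepiece_between N that by auto
    then have "T z - T (X n) = z - X n" by (rule samepiece_T)
    then show "T z = z + (X (Suc n) - X n)" using XS by simp
    then show "X (Suc n) \<le> T z \<and> T z \<le> X (Suc n) + L" using that by simp
  qed
  have iter: "\<forall>n z. n \<ge> N \<longrightarrow> X n \<le> z \<longrightarrow> z \<le> X n + L \<longrightarrow> (T^^k) z = z + (X (n+k) - X n)" for k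
  proof (induction k)
    case 0 then show ?case by simp
  next
    case (Suc k)
    show ?case
    proof (intro allI impI)
      fix n z assume h: "n \<ge> N" "X n \<le> z" "z \<le> X n + L"
      have "Suc n \<ge> N" using h(1) by simp
      then have "(T^^k) (T z) = T z + (X (Suc n + k) - X (Suc n))"
        using Suc.IH[rule_format, of "Suc n" "T z"] transl(2)[OF h] by blast
      then show "(T^^Suc k) z = z + (X (n + Suc k) - X n)"
        using transl(1)[OF h] by (simp add: funpow_swap1)
    qed
  qed
  obtain i j where ij: "i < j" "\<bar>X (N + j) - X (N + i)\<bar> < L"
    using pigeon_real[OF Lpos, of "\<lambda>j. X (N + j)"] rng by blast
  define p where "p = N + i"
  define e where "e = j - i"
  define t where "t = X (p + e) - X p"
  have e1: "e \<ge> 1" unfolding e_def using ij by simp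
  have pe: "p + e = N + j" unfolding p_def e_def using ij by simp
  have tL: "\<bar>t\<bar> < L" unfolding t_def pe using ij(2) p_def by simp
  have per: "X (p + Suc r * e) - X (p + r * e) = t" for r
  proof (induction r)
    case 0 then show ?case unfolding t_def by simp
  next
    case (Suc r)
    define s where "s = p + r * e"
    define s' where "s' = p + Suc r * e"
    have ss: "s' = s + e" unfolding s_def s'_def by simp
    have sN: "s \<ge> N" "s' \<ge> N" unfolding s_def s'_def p_def by auto
    have d: "X s' - X s = t" using Suc unfolding s_def s'_def .
    define z where "z = max (X s) (X s')"
    have z1: "X s \<le> z" "z \<le> X s + L" unfolding z_def using d tL by auto
    have z2: "X s' \<le> z" "z \<le> X s' + L" unfolding z_def using d tL Lpos by auto
    have "(T^^e) z = z + (X (s + e) - X s)" using iter sN z1 by blast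
    moreover have "(T^^e) z = z + (X (s' + e) - X s')" using iter sN z2 by blast
    ultimately have "X (s' + e) - X s' = t" using d ss by simp
    moreover have "s' + e = p + Suc (Suc r) * e" unfolding s'_def by simp
    ultimately show ?case unfolding s'_def by (simp add: algebra_simps)
  qed
  have lin: "X (p + r * e) = X p + real r * t" for r
  proof (induction r)
    case 0 then show ?case by simp
  next
    case (Suc r) then show ?case using per[of r] by (simp add: algebra_simps)
  qed
  have t0: "t = 0"
  proof (rule ccontr)
    assume "t \<noteq> 0"
    then have "\<bar>t\<bar> > 0" by simp
    then obtain r where r: "2 < real r * \<bar>t\<bar>" using ex_less_of_nat_mult by blast
    have "0 \<le> X (p + r * e)" "X (p + r * e) < 1" "0 \<le> X p" "X p < 1" using rng by auto
    then have "\<bar>real r * t\<bar> < 2" using lin[of r] by linarith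
    then show False using r by (simp add: abs_mult)
  qed
  have Xe: "X (p + e) = X p" using t0 unfolding t_def by simp
  have Ye: "Y (p + e) = Y p" using DL[of p] DL[of "p+e"] Xe unfolding D_def p_def by simp
  have "(T^^p) ((T^^e) u) = (T^^p) u" using Xe unfolding X_def by (simp only: funpow_add o_def)
  then have "(T^^e) u = u" using Tn_inj[of "(T^^e) u" u p] Tn_range[of u e] u uv v by auto
  moreover have "(T^^p) ((T^^e) v) = (T^^p) v" using Ye unfolding Y_def by (simp only: funpow_add o_def)
  then have "(T^^e) v = v" using Tn_inj[of "(T^^e) v" v p] Tn_range[of v e] u uv v by auto
  ultimately show ?thesis using e1 by blast
qed

end

context deck begin

lemma sa_in_A: "i \<in> {1..m} \<Longrightarrow> sa i \<in> Aint a i"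
  unfolding Aint_eq using sa_Suc[of i] apos by auto

lemma sb_in_B: "i \<in> {1..m} \<Longrightarrow> al + sb i \<in> Bint m a b i"
  unfolding Bint_eq using sb_Suc[of i] bpos by auto

lemma pre_P: assumes "1 \<le> j" "j < 2*m" shows "\<exists>s. 0 \<le> s \<and> s < 1 \<and> T s = P j \<and> (al \<le> s \<longleftrightarrow> even j)"
proof (cases "even j")
  case False
  define i where "i = (j+1) div 2"
  have ji: "j = 2*i - 1" "i \<in> {1..m}" unfolding i_def using False assms by (auto elim!: oddE)
  have "0 \<le> sa i \<and> sa i < al" using A_range[OF ji(2) sa_in_A[OF ji(2)]] .
  then show ?thesis using T_sa[OF ji(2)] ji False al_lt1 by (intro exI[of _ "sa i"]) auto
next
  case True
  define i where "i = j div 2 + 1"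
  have ji: "j = 2*i - 2" "i \<in> {1..m}" unfolding i_def using True assms by (auto elim!: evenE)
  have "al \<le> al + sb i \<and> al + sb i < 1" using B_range[OF ji(2) sb_in_B[OF ji(2)]] .
  then show ?thesis using T_sb[OF ji(2)] ji True al_pos by (intro exI[of _ "al + sb i"]) auto
qed

lemma H_P_strict: assumes "1 \<le> k" "Suc k < 2*m" shows "H (P k) < H (P (Suc k))"
proof -
  have Pk: "0 \<le> P k" "P k < P (Suc k)" "P (Suc k) < 1"
    using P_range[of k] P_strict[of k "Suc k"] P_lt1[of "Suc k"] assms by auto
  have le: "H (P k) \<le> H (P (Suc k))" using H_mono[of "P k" "P (Suc k)"] Pk by simp
  show ?thesis
  proof (rule ccontr)
    assume "\<not> ?thesis"
    then have eq: "H (P k) = H (P (Suc k))" using le by simp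
    have codes: "\<forall>n. al \<le> (T^^n) (P k) \<longleftrightarrow> al \<le> (T^^n) (P (Suc k))"
      using H_eq_codes[of "P k" "P (Suc k)"] Pk eq by simp
    obtain e where e: "e \<ge> 1" "(T^^e) (P k) = P k" "(T^^e) (P (Suc k)) = P (Suc k)"
      using recur[OF Pk codes] by blast
    obtain s1 where s1: "0 \<le> s1" "s1 < 1" "T s1 = P k" "al \<le> s1 \<longleftrightarrow> even k"
      using pre_P[of k] assms by auto
    obtain s2 where s2: "0 \<le> s2" "s2 < 1" "T s2 = P (Suc k)" "al \<le> s2 \<longleftrightarrow> even (Suc k)"
      using pre_P[of "Suc k"] assms by auto
    define w1 where "w1 = (T^^(e-1)) (P k)"
    define w2 where "w2 = (T^^(e-1)) (P (Suc k))"
    have ee: "Suc (e - 1) = e" using e by simp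
    have "T w1 = P k" unfolding w1_def using e(2) ee by (metis funpow.simps(2) o_apply)
    moreover have "0 \<le> w1 \<and> w1 < 1" unfolding w1_def using Tn_range Pk by simp
    ultimately have "w1 = s1" using T_inj[of w1 s1] s1 by simp
    have "T w2 = P (Suc k)" unfolding w2_def using e(3) ee by (metis funpow.simps(2) o_apply)
    moreover have "0 \<le> w2 \<and> w2 < 1" unfolding w2_def using Tn_range Pk by simp
    ultimately have "w2 = s2" using T_inj[of w2 s2] s2 by simp
    have "al \<le> w1 \<longleftrightarrow> al \<le> w2" unfolding w1_def w2_def using codes by blast
    then show False using \<open>w1 = s1\<close> \<open>w2 = s2\<close> s1 s2 by simp
  qed
qed

definition c where "c k = (if k = 0 then 0 else if k < 2*m then H (P k) else real k - 2*m + 1)"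

lemma c0[simp]: "c 0 = 0" by (simp add: c_def)
lemma c2m: "c (2*m) = 1" using m1 by (simp add: c_def)
lemma c_mid: "1 \<le> k \<Longrightarrow> k < 2*m \<Longrightarrow> c k = H (P k)" by (simp add: c_def)

lemma c_Suc: "c k < c (Suc k)"
proof -
  consider "k = 0" | "1 \<le> k \<and> Suc k < 2*m" | "1 \<le> k \<and> Suc k = 2*m" | "Suc k > 2*m" by linarith
  then show ?thesis
  proof cases
    case 1
    have "1 < 2*m" using m1 by simp
    then have "c (Suc k) = H (P 1)" using 1 by (simp add: c_def)
    moreover have "0 < H (P 1)" using H_pos[of "P 1"] P_range[of 1] P_lt1[of 1] m1 by simp
    ultimately show ?thesis using 1 by simp
  next
    case 2 then show ?thesis using H_P_strict[of k] by (simp add: c_def)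
  next
    case 3
    then have "c k = H (P k)" "c (Suc k) = 1" by (simp_all add: c_def)
    moreover have "H (P k) < 1" using H_lt1[of "P k"] P_range[of k] P_lt1[of k] 3 by simp
    ultimately show ?thesis by simp
  next
    case 4 then show ?thesis by (simp add: c_def)
  qed
qed

lemma c_strict: "strict_mono c"
  using c_Suc by (simp add: strict_mono_Suc_iff)

lemma c_range: "1 \<le> k \<Longrightarrow> k < 2*m \<Longrightarrow> 0 < c k \<and> c k < 1"
  using c_strict c2m by (metis c0 strict_mono_less not_one_le_zero less_one less_le_trans le_less)

end

definition phi :: "real \<Rightarrow> real \<Rightarrow> complex" where "phi \<beta> t = circ (t/2 + \<beta>)"

lemma phi_cont_on: "continuous_on S (phi \<beta>)"
  unfolding phi_def circ_def by (intro continuous_intros) auto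

lemma phi_isCont: "isCont (phi \<beta>) x"
  using phi_cont_on[of UNIV \<beta>] by (simp add: continuous_on_eq_continuous_at)

lemma circ_half: "circ (x + 1/2) = - circ x"
proof -
  have "circ (x + 1/2) = cis (2 * pi * x + pi)" unfolding circ_def by (simp add: algebra_simps)
  also have "\<dots> = cis (2 * pi * x) * cis pi" by (rule cis_mult[symmetric])
  finally show ?thesis unfolding circ_def by simp
qed

lemma circ_ne: "circ (s + 1/2) \<noteq> circ s"
proof
  assume "circ (s + 1/2) = circ s"
  then have "circ s = 0" using circ_half[of s] by simp
  then show False unfolding circ_def by simp
qed

context deck begin

definition cnt where "cnt y = card {j \<in> {1..<2*m}. c j \<le> y}"
definition eta where "eta y = y/2 + (if even (cnt y) then 1/2 else (0::real))"
definition beta :: "nat \<Rightarrow> real" where "beta k = (if odd k then 1/2 else 0)"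

lemma c_le_iff: "c i \<le> c j \<longleftrightarrow> i \<le> j" using c_strict by (simp add: strict_mono_less_eq)
lemma c_lt_iff: "c i < c j \<longleftrightarrow> i < j" using c_strict by (simp add: strict_mono_less)

lemma c_locate: assumes "0 \<le> y" "y < 1" shows "\<exists>k\<in>{1..2*m}. c (k-1) \<le> y \<and> y < c k"
proof -
  have "\<forall>n\<le>2*m. y < c n \<longrightarrow> (\<exists>k\<in>{1..n}. c (k-1) \<le> y \<and> y < c k)"
  proof (intro allI)
    fix n show "n \<le> 2*m \<longrightarrow> y < c n \<longrightarrow> (\<exists>k\<in>{1..n}. c (k-1) \<le> y \<and> y < c k)"
    proof (induction n)
      case 0 then show ?case using assms by simp
    next
      case (Suc n)
      show ?case
      proof (intro impI)
        assume h: "Suc n \<le> 2*m" "y < c (Suc n)"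
        show "\<exists>k\<in>{1..Suc n}. c (k-1) \<le> y \<and> y < c k"
        proof (cases "y < c n")
          case True then show ?thesis using Suc h by force
        next
          case False then show ?thesis using h by (intro bexI[of _ "Suc n"]) auto
        qed
      qed
    qed
  qed
  then show ?thesis using assms c2m by auto
qed

lemma cnt_eq: assumes "k \<in> {1..2*m}" "c (k-1) \<le> y" "y < c k" shows "cnt y = k - 1"
proof -
  have "{j \<in> {1..<2*m}. c j \<le> y} = {1..<k}"
  proof (intro set_eqI iffI)
    fix j assume "j \<in> {j \<in> {1..<2*m}. c j \<le> y}"
    then have "c j < c k" "1 \<le> j" using assms by auto
    then show "j \<in> {1..<k}" using c_lt_iff by auto
  next
    fix j assume j: "j \<in> {1..<k}"
    then have "c j \<le> c (k-1)" using c_le_iff by auto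
    then show "j \<in> {j \<in> {1..<2*m}. c j \<le> y}" using j assms by auto
  qed
  then show ?thesis unfolding cnt_def by simp
qed

lemma eta_piece: assumes "k \<in> {1..2*m}" "c (k-1) \<le> y" "y < c k" shows "eta y = y/2 + beta k"
proof -
  have "even (k - 1) \<longleftrightarrow> odd k" using assms(1) by (cases k) auto
  then show ?thesis unfolding eta_def beta_def cnt_eq[OF assms] by simp
qed

lemma c_bounds: "k \<le> 2*m \<Longrightarrow> 0 \<le> c k \<and> c k \<le> 1"
  using c_le_iff[of 0 k] c_le_iff[of k "2*m"] c2m by simp

abbreviation g where "g \<equiv> circle_lift eta"

lemma g_piece: assumes "k \<in> {1..2*m}" "c (k-1) \<le> t" "t < c k" shows "g t = phi (beta k) t"
proof -
  have "k - 1 \<le> 2*m" using assms(1) by (metis atLeastAtMost_iff diff_le_self le_trans)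
  then have "0 \<le> t" "t < 1" using assms c_bounds[of "k-1"] c_bounds[of k] by auto
  then have "frac t = t" by (simp add: frac_eq)
  then show ?thesis unfolding circle_lift_def phi_def using eta_piece[OF assms] by simp
qed

lemma g_wrap: assumes "c (2*m-1) - 1 < t" "t < 0" shows "g t = phi (1/2) t"
proof -
  have k: "2*m \<in> {1..2*m}" using m1 by simp
  have "0 \<le> t + 1" "t + 1 < 1" using assms c_bounds[of "2*m-1"] by auto
  then have "frac (t+1) = t+1" by (simp add: frac_eq)
  then have "frac t = t + 1" using frac_1_eq[of t] by simp
  moreover have "c (2*m - 1) \<le> t + 1" "t + 1 < c (2*m)" using assms c2m by auto
  ultimately have "g t = circ ((t+1)/2 + beta (2*m))" unfolding circle_lift_def
    using eta_piece[OF k, of "t+1"] m1 by simp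
  also have "\<dots> = phi (1/2) t" unfolding phi_def beta_def by (simp add: field_simps)
  finally show ?thesis .
qed

end

context deck begin

lemma g_cont: assumes "0 \<le> x" "x < 1" "x \<notin> c ` {1..<2*m}" shows "isCont g x"
proof (cases "x = 0")
  case True
  have a: "c (2*m-1) < 1" "0 < c 1" using c_range[of "2*m-1"] c_range[of 1] m1 by auto
  define S where "S = {c (2*m-1) - 1<..<c 1}"
  have "\<forall>t\<in>S. g t = phi (1/2) t"
  proof
    fix t assume t: "t \<in> S"
    show "g t = phi (1/2) t"
    proof (cases "t < 0")
      case True then show ?thesis using g_wrap t unfolding S_def by auto
    next
      case False
      have k: "(1::nat) \<in> {1..2*m}" using m1 by simp
      have "g t = phi (beta 1) t" using g_piece[OF k] False t unfolding S_def by auto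
      then show ?thesis by (simp add: beta_def)
    qed
  qed
  moreover have "open S" "0 \<in> S" unfolding S_def using a by auto
  ultimately have "eventually (\<lambda>t. g t = phi (1/2) t) (nhds x)" unfolding eventually_nhds using True by blast
  then show ?thesis using isCont_cong phi_isCont by blast
next
  case False
  obtain k where k: "k \<in> {1..2*m}" "c (k-1) \<le> x" "x < c k" using c_locate assms by blast
  have "c (k-1) \<noteq> x"
  proof (cases "k - 1 = 0")
    case True then show ?thesis using False by simp
  next
    case False then have "k - 1 \<in> {1..<2*m}" using k by auto
    then show ?thesis using assms(3) by blast
  qed
  then have lt: "c (k-1) < x" using k by simp
  define S where "S = {c (k-1)<..<c k}"
  have "\<forall>t\<in>S. g t = phi (beta k) t" using g_piece[OF k(1)] unfolding S_def by auto
  moreover have "open S" "x \<in> S" unfolding S_def using lt k by auto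
  ultimately have "eventually (\<lambda>t. g t = phi (beta k) t) (nhds x)" unfolding eventually_nhds by blast
  then show ?thesis using isCont_cong phi_isCont by blast
qed

lemma phi_left: "(phi \<beta> \<longlongrightarrow> phi \<beta> x) (at_left x)"
  using phi_isCont[where \<beta>=\<beta> and x=x] unfolding isCont_def filterlim_at_split by blast

lemma phi_right: "(phi \<beta> \<longlongrightarrow> phi \<beta> x) (at_right x)"
  using phi_isCont[where \<beta>=\<beta> and x=x] unfolding isCont_def filterlim_at_split by blast

lemma g_jump: assumes k: "k \<in> {1..<2*m}" shows "jump_discont eta (c k) \<and> \<not> isCont g (c k)"
proof -
  have k1: "k \<in> {1..2*m}" and k2: "Suc k \<in> {1..2*m}" using k by auto
  have c1: "c (k-1) < c k" "c k < c (Suc k)" using c_lt_iff k by auto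
  have evl: "eventually (\<lambda>t. g t = phi (beta k) t) (at_left (c k))"
    using eventually_at_left_real[OF c1(1)] by eventually_elim (use g_piece[OF k1] in auto)
  have evr: "eventually (\<lambda>t. g t = phi (beta (Suc k)) t) (at_right (c k))"
    using eventually_at_right_real[OF c1(2)] by eventually_elim (use g_piece[OF k2] in auto)
  define L where "L = phi (beta k) (c k)"
  define R where "R = phi (beta (Suc k)) (c k)"
  have tl: "(g \<longlongrightarrow> L) (at_left (c k))" unfolding L_def using tendsto_cong[OF evl] phi_left by blast
  have tr: "(g \<longlongrightarrow> R) (at_right (c k))" unfolding R_def using tendsto_cong[OF evr] phi_right by blast
  have gR: "g (c k) = R" unfolding R_def using g_piece[OF k2] c1 by simp
  have LR: "L \<noteq> R"
  proof (cases "odd k")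
    case True
    then have "L = circ (c k / 2 + 1/2)" "R = circ (c k / 2)" unfolding L_def R_def phi_def beta_def by auto
    then show ?thesis using circ_ne by simp
  next
    case False
    then have "R = circ (c k / 2 + 1/2)" "L = circ (c k / 2)" unfolding L_def R_def phi_def beta_def by auto
    then show ?thesis using circ_ne by metis
  qed
  have "jump_discont eta (c k)" unfolding jump_discont_def using tl tr LR gR by blast
  moreover have "\<not> isCont g (c k)"
  proof
    assume "isCont g (c k)"
    then have "(g \<longlongrightarrow> g (c k)) (at_left (c k))" unfolding isCont_def filterlim_at_split by blast
    then have "L = g (c k)" using tl tendsto_unique trivial_limit_at_left_real by blast
    then show False using gR LR by simp
  qed
  ultimately show ?thesis by blast
qed

lemma discont_eq: "discont_set eta = c ` {1..<2*m}"
proof (intro set_eqI iffI)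
  fix x assume "x \<in> discont_set eta"
  then show "x \<in> c ` {1..<2*m}" unfolding discont_set_def using g_cont by auto
next
  fix x assume "x \<in> c ` {1..<2*m}"
  then obtain k where k: "k \<in> {1..<2*m}" "x = c k" by blast
  then show "x \<in> discont_set eta" unfolding discont_set_def using g_jump[OF k(1)] c_range[of k] by auto
qed

lemma card_discont: "card (discont_set eta) = 2*m - 1"
proof -
  have "inj_on c {1..<2*m}" using c_strict strict_mono_imp_inj_on by blast
  then show ?thesis unfolding discont_eq by (simp add: card_image)
qed

lemma eta_selector: "preimage_selector eta"
proof -
  have "frac (2 * eta x) = x" if "x \<in> {0..<1}" for x
  proof -
    have fx: "frac x = x" using that by (simp add: frac_eq)
    show ?thesis
    proof (cases "even (cnt x)")
      case True then have "2 * eta x = x + 1" unfolding eta_def by simp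
      then show ?thesis using frac_1_eq[of x] fx by simp
    next
      case False then have "2 * eta x = x" unfolding eta_def by simp
      then show ?thesis using fx by simp
    qed
  qed
  moreover have "finite (discont_set eta)" unfolding discont_eq by simp
  moreover have "\<forall>x\<in>discont_set eta. jump_discont eta x" unfolding discont_eq using g_jump by blast
  ultimately show ?thesis unfolding preimage_selector_def by blast
qed

lemma flower: assumes "0 \<le> x" "x < 1" shows "frac (H x) \<in> flower_of eta"
proof -
  obtain k where k: "k\<in>{1..2*m}" "P (k-1) \<le> T x" "T x < P k" "odd k \<longleftrightarrow> al \<le> x" using T_img assms by blast
  have km: "k - 1 \<le> 2*m" "k - 1 < k" using k(1) by auto
  have Tx: "0 \<le> T x" "T x < 1" using T_range assms by auto
  define y where "y = H (T x)"
  have y01: "0 < y" "y < 1" using H_pos H_lt1 Tx y_def by auto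
  have lo: "c (k-1) \<le> y"
  proof (cases "k = 1")
    case True then show ?thesis using y01 by simp
  next
    case False then have "1 \<le> k-1" "k-1 < 2*m" using k by auto
    then have "c (k-1) = H (P (k-1))" by (simp add: c_mid)
    moreover have "H (P (k-1)) \<le> y" unfolding y_def using H_mono[of "P (k-1)" "T x"] P_range[of "k-1"] k km Tx by simp
    ultimately show ?thesis by simp
  qed
  have hi: "y \<le> c k"
  proof (cases "k = 2*m")
    case True then show ?thesis using y01 c2m by simp
  next
    case False then have kk: "1 \<le> k" "k < 2*m" using k by auto
    then have "c k = H (P k)" by (simp add: c_mid)
    moreover have "y \<le> H (P k)" unfolding y_def using H_mono[of "T x" "P k"] P_lt1[of k] Tx k kk by simp
    ultimately show ?thesis by simp
  qed
  have Hx: "H x = y/2 + beta k"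
  proof (cases "al \<le> x")
    case True then show ?thesis using H_B[of x] assms k(4) unfolding y_def beta_def by simp
  next
    case False then show ?thesis using H_A[of x] assms k(4) unfolding y_def beta_def by simp
  qed
  have ck: "c (k-1) < c k" using c_lt_iff km by auto
  have sub: "phi (beta k) ` {c (k-1)..<c k} \<subseteq> closure (circ ` eta ` {0..<1})"
  proof
    fix z assume "z \<in> phi (beta k) ` {c (k-1)..<c k}"
    then obtain t where t: "t \<in> {c (k-1)..<c k}" "z = phi (beta k) t" by blast
    have "0 \<le> t" "t < 1" using t c_bounds[of "k-1"] c_bounds[of k] km k(1) by auto
    then have t01: "t \<in> {0..<1}" by simp
    have zeq: "z = circ (eta t)" using eta_piece[OF k(1)] t unfolding phi_def by simp
    have "z \<in> circ ` eta ` {0..<1}" unfolding zeq by (rule imageI, rule imageI, rule t01)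
    then show "z \<in> closure (circ ` eta ` {0..<1})" by (rule subsetD[OF closure_subset])
  qed
  have "phi (beta k) ` closure {c (k-1)..<c k} \<subseteq> closure (circ ` eta ` {0..<1})"
    by (rule image_closure_subset[OF phi_cont_on closed_closure sub])
  then have "phi (beta k) y \<in> closure (circ ` eta ` {0..<1})" using lo hi closure_atLeastLessThan[OF ck] by auto
  moreover have "phi (beta k) y = circ (H x)" unfolding phi_def Hx by simp
  moreover have "0 < H x" "H x < 1" using H_pos H_lt1 assms by auto
  ultimately show ?thesis unfolding flower_of_def by (simp add: frac_eq)
qed

lemma main: "\<exists>F. is_flower (2 * m - 1) F \<and> (\<forall>x\<in>{0..<1}. frac (H x) \<in> F)"
proof -
  have "is_flower (2 * m - 1) (flower_of eta)"
    unfolding is_flower_def using eta_selector card_discont by blast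
  then show ?thesis using flower by auto
qed

end

theorem theorem4:
  fixes m :: nat and a b :: "nat \<Rightarrow> real"
  assumes "m \<ge> 1"
    and "\<forall>i\<in>{1..m}. a i > 0 \<and> b i > 0"
    and "(\<Sum>i=1..m. a i) + (\<Sum>i=1..m. b i) = 1"
  shows "\<exists>F. is_flower (2 * m - 1) F \<and> (\<forall>x\<in>{0..<1}. frac (H_map m a b x) \<in> F)"
proof -
  interpret deck m a b using assms by unfold_locales
  show ?thesis by (rule main)
qed


end
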